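(* For integers $s,t\ge0$ and real polynomials $f,g$, let $$\langle f(x),g(y)\rangle_{s,t}=\int_{(0,1)\times(0,1)}\frac{x^sy^s}{x+y}f(x)g(y)\left(\frac{1-x}{1+x}\right)^t\left(\frac{1-y}{1+y}\right)^tdx\,dy,\qquad \mathcal L_{s,t}(f)=\sqrt2\int_0^1\frac{x^s}{1+x}f(x)\left(\frac{1-x}{1+x}\right)^tdx.$$ Then for all $s,t\ge0$ and all polynomials $f,g$: (1) $\langle f(x),g(y)\rangle_{s+1,t}=\langle xf(x),yg(y)\rangle_{s,t}$; (2) $\langle f(x),g(y)\rangle_{s,t+1}=\langle f(x),g(y)\rangle_{s,t}-\mathcal L_{s,t}(f)\,\mathcal L_{s,t}(g)$. *)

theory Defs
  imports "HOL-Analysis.Analysis" "HOL-Computational_Algebra.Polynomial"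
begin

definition bform :: "nat \<Rightarrow> nat \<Rightarrow> real poly \<Rightarrow> real poly \<Rightarrow> real" where
  "bform s t f g =
     (LINT p : {0<..<1::real} \<times> {0<..<1::real} | lborel.
        (fst p ^ s * snd p ^ s / (fst p + snd p)) * poly f (fst p) * poly g (snd p)
        * ((1 - fst p) / (1 + fst p)) ^ t * ((1 - snd p) / (1 + snd p)) ^ t)"

definition Lfun :: "nat \<Rightarrow> nat \<Rightarrow> real poly \<Rightarrow> real" where
  "Lfun s t f = sqrt 2 *
     (LINT x : {0<..<1::real} | lborel. x ^ s / (1 + x) * poly f x * ((1 - x) / (1 + x)) ^ t)"

end

theory Submission
  imports Defs
begin

definition Kf :: "nat \<Rightarrow> nat \<Rightarrow> real poly \<Rightarrow> real poly \<Rightarrow> real \<times> real \<Rightarrow> real" where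
  "Kf s t f g p = indicator ({0<..<1::real} \<times> {0<..<1::real}) p *\<^sub>R ((fst p ^ s * snd p ^ s / (fst p + snd p)) * poly f (fst p) * poly g (snd p)
        * ((1 - fst p) / (1 + fst p)) ^ t * ((1 - snd p) / (1 + snd p)) ^ t)"

lemma bform_Kf: "bform s t f g = integral\<^sup>L lborel (Kf s t f g)"
  unfolding bform_def Kf_def set_lebesgue_integral_def ..

lemma Kf_meas: "Kf s t f g \<in> borel_measurable lborel"
  unfolding measurable_lborel2 Kf_def
  apply (rule borel_measurable_continuous_on_indicator)
   apply (simp add: borel_open open_Times)
  apply (intro continuous_intros)
  apply auto
  done

lemma phi_int: "set_integrable lborel {0<..<1::real} (\<lambda>x. x powr (-1/2))"
proof -
  have "set_integrable lborel {0..1::real} (\<lambda>t. t powr (1/2 - 1) * (1 - t) powr (1 - 1))"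
    by (rule integrable_Beta) auto
  then have "set_integrable lborel {0<..<1::real} (\<lambda>t. t powr (1/2 - 1) * (1 - t) powr (1 - 1))"
    by (rule set_integrable_subset) auto
  then show ?thesis
    unfolding set_integrable_def
    by (rule Bochner_Integration.integrable_cong[THEN iffD1, rotated 2]) (auto split: split_indicator)
qed

lemma prod_int:
  fixes a b :: "real \<Rightarrow> real"
  assumes a: "integrable lborel a" and b: "integrable lborel b"
  shows "integrable lborel (\<lambda>p::real\<times>real. a (fst p) * b (snd p))"
proof -
  have am[measurable]: "a \<in> borel_measurable lborel" using a by auto
  have bm[measurable]: "b \<in> borel_measurable lborel" using b by auto
  have "integrable (lborel \<Otimes>\<^sub>M lborel) (\<lambda>p::real\<times>real. a (fst p) * b (snd p))"
  proof (rule lborel_pair.Fubini_integrable)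
    show "(\<lambda>p::real\<times>real. a (fst p) * b (snd p)) \<in> borel_measurable (lborel \<Otimes>\<^sub>M lborel)"
      by measurable
    show "integrable lborel (\<lambda>x. LINT y|lborel. norm (a (fst (x, y)) * b (snd (x, y))))"
      by (simp add: abs_mult integrable_mult_left a b)
    show "AE x in lborel. integrable lborel (\<lambda>y. a (fst (x, y)) * b (snd (x, y)))"
      by (simp add: b)
  qed
  then show ?thesis by (simp add: lborel_prod)
qed

lemma prod_integral:
  fixes a b :: "real \<Rightarrow> real"
  assumes a: "integrable lborel a" and b: "integrable lborel b"
  shows "integral\<^sup>L lborel (\<lambda>p::real\<times>real. a (fst p) * b (snd p)) = integral\<^sup>L lborel a * integral\<^sup>L lborel b"
proof -
  have "integrable (lborel \<Otimes>\<^sub>M lborel) (\<lambda>p::real\<times>real. a (fst p) * b (snd p))"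
    using prod_int[OF a b] by (simp add: lborel_prod)
  from lborel_pair.integral_fst'[OF this, symmetric] show ?thesis
    by (simp add: lborel_prod)
qed

definition phi :: "real \<Rightarrow> real" where
  "phi x = indicator {0<..<1::real} x * x powr (-1/2)"

lemma phi_integrable: "integrable lborel phi"
  using phi_int unfolding set_integrable_def phi_def by simp

lemma poly_bound: obtains C :: real where "C \<ge> 0" "\<And>x. x \<in> {0..1} \<Longrightarrow> \<bar>poly f x\<bar> \<le> C"
proof -
  have "bounded (poly f ` {0..1::real})"
    by (intro compact_imp_bounded compact_continuous_image) (auto intro!: continuous_intros)
  then obtain C where "C > 0" "\<And>y. y \<in> poly f ` {0..1::real} \<Longrightarrow> norm y \<le> C"
    by (auto simp: bounded_pos)
  then show ?thesis using that[of C] by auto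
qed

lemma phi_ge1: "0 < x \<Longrightarrow> x < 1 \<Longrightarrow> 1 \<le> (x::real) powr (-1/2)"
  by (smt (verit, best) half_gt_zero_iff powr01_less_one)

lemma inv_sum_le: "0 < x \<Longrightarrow> 0 < y \<Longrightarrow> 1 / (x + y) \<le> (x::real) powr (-1/2) * y powr (-1/2)"
proof -
  assume x: "0 < x" and y: "0 < y"
  have e: "x powr (-1/2) * y powr (-1/2) = 1 / (sqrt x * sqrt y)"
    using x y by (simp add: powr_minus_divide powr_half_sqrt)
  have "0 \<le> (sqrt x - sqrt y)^2" by simp
  then have "2 * (sqrt x * sqrt y) \<le> x + y"
    using x y by (simp add: power2_eq_square algebra_simps)
  then have "sqrt x * sqrt y \<le> x + y"
    using x y by (smt (verit) mult_pos_pos real_sqrt_gt_zero)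
  then show ?thesis unfolding e
    using x y by (intro divide_left_mono) auto
qed

lemma T_bound: "0 < x \<Longrightarrow> x < 1 \<Longrightarrow> \<bar>((1 - x) / (1 + x)) ^ t\<bar> \<le> (1::real)"
  by (simp add: power_le_one_iff)

lemma Kf_integrable: "integrable lborel (Kf s t f g)"
proof -
  obtain Cf where Cf: "Cf \<ge> 0" "\<And>x. x \<in> {0..1} \<Longrightarrow> \<bar>poly f x\<bar> \<le> Cf" using poly_bound[of f] by blast
  obtain Cg where Cg: "Cg \<ge> 0" "\<And>x. x \<in> {0..1} \<Longrightarrow> \<bar>poly g x\<bar> \<le> Cg" using poly_bound[of g] by blast
  have "integrable lborel (\<lambda>p::real\<times>real. (Cf * Cg) * (phi (fst p) * phi (snd p)))"
    by (intro integrable_mult_right prod_int phi_integrable)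
  then show ?thesis
  proof (rule Bochner_Integration.integrable_bound)
    show "Kf s t f g \<in> borel_measurable lborel" by (rule Kf_meas)
    show "AE p in lborel. norm (Kf s t f g p) \<le> norm ((Cf * Cg) * (phi (fst p) * phi (snd p)))"
    proof (rule AE_I2)
      fix p :: "real \<times> real"
      obtain x y where p: "p = (x, y)" by (cases p)
      show "norm (Kf s t f g p) \<le> norm ((Cf * Cg) * (phi (fst p) * phi (snd p)))"
      proof (cases "0 < x \<and> x < 1 \<and> 0 < y \<and> y < 1")
        case False
        then show ?thesis by (auto simp: p Kf_def)
      next
        case True
        have "\<bar>x ^ s * y ^ s / (x + y) * poly f x * poly g y * ((1 - x) / (1 + x)) ^ t * ((1 - y) / (1 + y)) ^ t\<bar>
           = (x ^ s * y ^ s) * (1 / (x + y)) * \<bar>poly f x\<bar> * \<bar>poly g y\<bar> * \<bar>((1 - x) / (1 + x)) ^ t\<bar> * \<bar>((1 - y) / (1 + y)) ^ t\<bar>"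
          using True by (simp add: abs_mult)
        also have "\<dots> \<le> 1 * (x powr (-1/2) * y powr (-1/2)) * Cf * Cg * 1 * 1"
          using True Cf Cg T_bound[of x t] T_bound[of y t] inv_sum_le[of x y]
          by (intro mult_mono) (auto simp: power_le_one mult_le_one)
        finally show ?thesis using True Cf Cg
          by (simp add: p Kf_def phi_def abs_mult mult_ac)
      qed
    qed
  qed
qed

definition Af :: "nat \<Rightarrow> nat \<Rightarrow> real poly \<Rightarrow> real \<Rightarrow> real" where
  "Af s t f x = indicator {0<..<1::real} x *\<^sub>R (x ^ s / (1 + x) * poly f x * ((1 - x) / (1 + x)) ^ t)"

lemma Lfun_Af: "Lfun s t f = sqrt 2 * integral\<^sup>L lborel (Af s t f)"
  unfolding Lfun_def Af_def set_lebesgue_integral_def by simp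

lemma Af_integrable: "integrable lborel (Af s t f)"
proof -
  obtain Cf where Cf: "Cf \<ge> 0" "\<And>x. x \<in> {0..1} \<Longrightarrow> \<bar>poly f x\<bar> \<le> Cf" using poly_bound[of f] by blast
  have "integrable lborel (\<lambda>x. Cf * phi x)"
    by (intro integrable_mult_right phi_integrable)
  then show ?thesis
  proof (rule Bochner_Integration.integrable_bound)
    show "Af s t f \<in> borel_measurable lborel"
      unfolding measurable_lborel2 Af_def
      apply (rule borel_measurable_continuous_on_indicator)
       apply (simp add: borel_open)
      apply (intro continuous_intros)
      apply auto
      done
    show "AE x in lborel. norm (Af s t f x) \<le> norm (Cf * phi x)"
    proof (rule AE_I2)
      fix x :: real
      show "norm (Af s t f x) \<le> norm (Cf * phi x)"
      proof (cases "0 < x \<and> x < 1")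
        case False
        then show ?thesis by (auto simp: Af_def)
      next
        case True
        have "\<bar>x ^ s / (1 + x) * poly f x * ((1 - x) / (1 + x)) ^ t\<bar>
           = (x ^ s) * (1 / (1 + x)) * \<bar>poly f x\<bar> * \<bar>((1 - x) / (1 + x)) ^ t\<bar>"
          using True by (simp add: abs_mult)
        also have "\<dots> \<le> 1 * 1 * Cf * 1"
          using True Cf T_bound[of x t]
          by (intro mult_mono) (auto simp: power_le_one)
        also have "\<dots> \<le> Cf * x powr (-1/2)"
          using True Cf phi_ge1[of x] by (simp add: mult_le_cancel_left1)
        finally show ?thesis using True Cf
          by (simp add: Af_def phi_def abs_mult)
      qed
    qed
  qed
qed

lemma key_alg:
  fixes x y F G P Q :: real
  assumes "0 < x" "x < 1" "0 < y" "y < 1"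
  shows "P / (x + y) * F * G * ((1 - x) / (1 + x)) ^ t * ((1 - y) / (1 + y)) ^ t
         - P / (x + y) * F * G * ((1 - x) / (1 + x)) ^ (t+1) * ((1 - y) / (1 + y)) ^ (t+1)
       = 2 * (P * F * G * ((1 - x) / (1 + x)) ^ t * ((1 - y) / (1 + y)) ^ t / ((1 + x) * (1 + y)))"
proof -
  have gen: "P / (x + y) * F * G * A ^ t * B ^ t - P / (x + y) * F * G * A ^ (t+1) * B ^ (t+1)
      = P * F * G * A ^ t * B ^ t * ((1 - A * B) / (x + y))" for A B :: real
    by (simp add: power_add algebra_simps diff_divide_distrib)
  have h: "(1 - (1 - x) / (1 + x) * ((1 - y) / (1 + y))) / (x + y) = 2 / ((1 + x) * (1 + y))"
  proof -
    have g: "1 - N / d = (d - N) / d" if "d \<noteq> 0" for N d :: real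
      using that by (simp add: diff_divide_distrib)
    have d: "(1+x)*(1+y) \<noteq> 0" using assms by simp
    have a: "1 - (1 - x) / (1 + x) * ((1 - y) / (1 + y)) = ((1+x)*(1+y) - (1-x)*(1-y)) / ((1+x)*(1+y))"
      unfolding times_divide_times_eq by (rule g[OF d])
    have b: "(1+x)*(1+y) - (1-x)*(1-y) = 2*(x+y)" by algebra
    have c: "x + y \<noteq> 0" using assms by simp
    have e: "2 * c / D / c = 2 / D" if "c \<noteq> 0" for c D :: real using that by simp
    show ?thesis unfolding a b by (rule e[OF c])
  qed
  show ?thesis unfolding gen h by simp
qed

lemma Kf_step: "Kf s (t+1) f g p = Kf s t f g p - 2 * (Af s t f (fst p) * Af s t g (snd p))"
proof -
  obtain x y where p: "p = (x, y)" by (cases p)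
  show ?thesis
  proof (cases "0 < x \<and> x < 1 \<and> 0 < y \<and> y < 1")
    case False
    then show ?thesis by (auto simp: p Kf_def Af_def)
  next
    case True
    then show ?thesis
      using key_alg[of x y "x ^ s * y ^ s" "poly f x" "poly g y" t]
      by (simp add: p Kf_def Af_def field_simps)
  qed
qed

theorem proposition2p2:
  fixes s t :: nat and f g :: "real poly"
  shows "bform (s + 1) t f g = bform s t ([:0, 1:] * f) ([:0, 1:] * g) \<and>
         bform s (t + 1) f g = bform s t f g - Lfun s t f * Lfun s t g"
proof
  show "bform (s + 1) t f g = bform s t ([:0, 1:] * f) ([:0, 1:] * g)"
    unfolding bform_Kf
    by (rule Bochner_Integration.integral_cong) (auto simp: Kf_def mult_ac)
next
  have "bform s (t + 1) f g = integral\<^sup>L lborel (\<lambda>p. Kf s t f g p - 2 * (Af s t f (fst p) * Af s t g (snd p)))"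
    unfolding bform_Kf Kf_step ..
  also have "\<dots> = bform s t f g - 2 * (integral\<^sup>L lborel (Af s t f) * integral\<^sup>L lborel (Af s t g))"
    unfolding bform_Kf
    by (subst Bochner_Integration.integral_diff)
       (auto intro!: Kf_integrable integrable_mult_right prod_int Af_integrable simp: prod_integral Af_integrable)
  also have "\<dots> = bform s t f g - Lfun s t f * Lfun s t g"
    unfolding Lfun_Af by simp
  finally show "bform s (t + 1) f g = bform s t f g - Lfun s t f * Lfun s t g" .
qed

end
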